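(* Let Assumption 1 hold with $\delta\in(0,1]$, let $A\ge1$, define $\alpha=2L\{1-\Phi(A\sqrt{2\log L})\}+2A_0(1+A\sqrt{2\log L})^{1+\delta}/(L^{A^2-1}d_{n,\delta}^{2+\delta})$, $r=A\sqrt{2\log(L)/n}$, and assume $L\le\exp(d_{n,\delta}^2/(2A^2))$. Fix $p\in[1,\infty]$. Then with probability at least $1-\alpha$, every STIV solution $(\widehat\beta,\widehat\sigma)$ satisfies $$\big|{\bf D_X}^{-1}(\widehat\beta-\beta^* )\big|_p\le\min_{J\subseteq\{1,\dots,K\}}\max\left(\frac{2\widehat\sigma r}{\widetilde\kappa_{p,J}}\left(1-\frac{r}{\widetilde\kappa^*_{J_{\rm end},J}}-\frac{r^2}{\widetilde\kappa^*_{J^c_{\rm end},J}}\right)_+^{-1},\ \frac{6\,|({\bf D_X}^{-1}\beta^* )_{J^c}|_1}{1-c}\right).$$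
   Context: Setting: integers $n,K,L$ with $L\ge K$, $k_{\rm end}\in\{0,\dots,K\}$; observations $(y_i,x_i,z_i)$, $i=1,\dots,n$, with $y_i=x_i^T\beta^*+u_i$, $x_i\in\mathbb R^K$, $z_i\in\mathbb R^L$, the $(y_i,x_i,z_i,u_i)$ mutually independent; $J_{\rm end}=\{1,\dots,k_{\rm end}\}$, $J_{\rm end}^c$ its complement, $z_{li}=x_{(k_{\rm end}+l)i}$ for $l\le K-k_{\rm end}$. ${\bf Y},{\bf X},{\bf Z}$ the data matrices; $x_{k*}=\max_i|x_{ki}|$, $z_{l*}=\max_i|z_{li}|$; ${\bf D_X}={\rm diag}(x_{k*}^{-1})$, ${\bf D_Z}={\rm diag}(z_{l*}^{-1})$; $\Psi_n=\frac1n{\bf D_Z}{\bf Z}^T{\bf X}{\bf D_X}$; $\widehat Q(\beta)=\frac1n\sum(y_i-x_i^T\beta)^2$. $\Delta_J$ zeroes coordinates outside $J$, $J^c$ complement; $(a)_+^{-1}=1/\max(a,0)$, $a/0=\infty$ for $a>0$, $1/\infty=0$. Enlarged-cone sensitivities for $c\in(0,1)$: $\widetilde C_J=\{\Delta\in\mathbb R^K:|\Delta_{J^c}|_1\le\frac{2+c}{1-c}|\Delta_J|_1\}$, $\widetilde\kappa_{p,J}=\inf\{|\Psi_n\Delta|_\infty:\Delta\in\widetilde C_J,|\Delta|_p=1\}$, $\widetilde\kappa^*_{J_0,J}=\inf\{|\Psi_n\Delta|_\infty:\Delta\in\widetilde C_J,|\Delta_{J_0}|_1=1\}$ ($=\infty$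 if $J_0=\varnothing$). STIV estimator: any minimizer $(\widehat\beta,\widehat\sigma)$ of $|{\bf D_X}^{-1}\beta|_1+c\sigma$ over $\{(\beta,\sigma):\sigma>0,|\frac1n{\bf D_Z}{\bf Z}^T({\bf Y}-{\bf X}\beta)|_\infty\le\sigma r,\widehat Q(\beta)\le\sigma^2\}$. Assumption 1: for all $i,l$, $\mathbb E|z_{li}u_i|^{2+\delta}<\infty$, $\mathbb E[z_{li}u_i]=0$, $z_{li}u_i$ not a.s. zero; $d_{n,\delta}=\min_l\sqrt{\sum_i\mathbb E z_{li}^2u_i^2}/(\sum_i\mathbb E|z_{li}u_i|^{2+\delta})^{1/(2+\delta)}$. $\Phi$ is the standard normal cdf and $A_0$ the absolute constant of the Jing–Shao–Wang self-normalized moderate deviation bound: for independent mean-zero $X_i$ with $0<\mathbb E|X_i|^{2+\delta}<\infty$, $|\mathbb P(S_n/V_n\ge x)-(1-\Phi(x))|\le A_0(1+x)^{1+\delta}e^{-x^2/2}/d^{2+\delta}$ for $0\le x\le d$, where $S_n=\sum X_i$, $V_n^2=\sum X_i^2$, $d=(\sum\mathbb EX_i^2)^{1/2}/(\sum\mathbb E|X_i|^{2+\delta})^{1/(2+\delta)}$. *)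

theory Defs
  imports "HOL-Probability.Probability"
begin

(* Data for one realisation: Y i, X i k (row i, column k), Z i l; indices are 0-based:
   i < n, k < K, l < L. *)

definition xstar :: "nat \<Rightarrow> (nat \<Rightarrow> nat \<Rightarrow> real) \<Rightarrow> nat \<Rightarrow> real" where
  "xstar n X k = Max ((\<lambda>i. \<bar>X i k\<bar>) ` {..<n})"

definition zstar :: "nat \<Rightarrow> (nat \<Rightarrow> nat \<Rightarrow> real) \<Rightarrow> nat \<Rightarrow> real" where
  "zstar n Z l = Max ((\<lambda>i. \<bar>Z i l\<bar>) ` {..<n})"

definition sup_norm :: "nat \<Rightarrow> (nat \<Rightarrow> real) \<Rightarrow> real" where
  "sup_norm N v = Max (insert 0 ((\<lambda>k. \<bar>v k\<bar>) ` {..<N}))"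

definition l1_norm :: "nat \<Rightarrow> (nat \<Rightarrow> real) \<Rightarrow> real" where
  "l1_norm N v = (\<Sum>k<N. \<bar>v k\<bar>)"

definition lp_norm :: "nat \<Rightarrow> ereal \<Rightarrow> (nat \<Rightarrow> real) \<Rightarrow> real" where
  "lp_norm N p v = (if p = \<infinity> then sup_norm N v
     else (\<Sum>k<N. \<bar>v k\<bar> powr real_of_ereal p) powr (1 / real_of_ereal p))"

definition restr :: "nat set \<Rightarrow> (nat \<Rightarrow> real) \<Rightarrow> nat \<Rightarrow> real" where
  "restr J v = (\<lambda>k. if k \<in> J then v k else 0)"

definition Psi :: "nat \<Rightarrow> nat \<Rightarrow> (nat \<Rightarrow> nat \<Rightarrow> real) \<Rightarrow> (nat \<Rightarrow> nat \<Rightarrow> real)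
    \<Rightarrow> (nat \<Rightarrow> real) \<Rightarrow> nat \<Rightarrow> real" where
  "Psi n K X Z \<Delta> l = (1 / real n) * inverse (zstar n Z l) *
     (\<Sum>i<n. Z i l * (\<Sum>k<K. X i k * inverse (xstar n X k) * \<Delta> k))"

definition cone :: "nat \<Rightarrow> real \<Rightarrow> nat set \<Rightarrow> (nat \<Rightarrow> real) set" where
  "cone K c J = {\<Delta>. l1_norm K (restr ({..<K} - J) \<Delta>) \<le> (2 + c) / (1 - c) * l1_norm K (restr J \<Delta>)}"

definition kappa_p :: "nat \<Rightarrow> nat \<Rightarrow> nat \<Rightarrow> (nat \<Rightarrow> nat \<Rightarrow> real) \<Rightarrow> (nat \<Rightarrow> nat \<Rightarrow> real)
    \<Rightarrow> real \<Rightarrow> ereal \<Rightarrow> nat set \<Rightarrow> ereal" where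
  "kappa_p n K L X Z c p J =
     Inf {ereal (sup_norm L (Psi n K X Z \<Delta>)) | \<Delta>. \<Delta> \<in> cone K c J \<and> lp_norm K p \<Delta> = 1}"

definition kappa_star :: "nat \<Rightarrow> nat \<Rightarrow> nat \<Rightarrow> (nat \<Rightarrow> nat \<Rightarrow> real) \<Rightarrow> (nat \<Rightarrow> nat \<Rightarrow> real)
    \<Rightarrow> real \<Rightarrow> nat set \<Rightarrow> nat set \<Rightarrow> ereal" where
  "kappa_star n K L X Z c J0 J = (if J0 = {} then \<infinity> else
     Inf {ereal (sup_norm L (Psi n K X Z \<Delta>)) | \<Delta>. \<Delta> \<in> cone K c J \<and> l1_norm K (restr J0 \<Delta>) = 1})"

definition Qhat :: "nat \<Rightarrow> nat \<Rightarrow> (nat \<Rightarrow> real) \<Rightarrow> (nat \<Rightarrow> nat \<Rightarrow> real) \<Rightarrow> (nat \<Rightarrow> real) \<Rightarrow> real" where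
  "Qhat n K Y X \<beta> = (1 / real n) * (\<Sum>i<n. (Y i - (\<Sum>k<K. X i k * \<beta> k))\<^sup>2)"

definition stiv_feasible :: "nat \<Rightarrow> nat \<Rightarrow> nat \<Rightarrow> real \<Rightarrow> (nat \<Rightarrow> real) \<Rightarrow> (nat \<Rightarrow> nat \<Rightarrow> real)
    \<Rightarrow> (nat \<Rightarrow> nat \<Rightarrow> real) \<Rightarrow> (nat \<Rightarrow> real) \<Rightarrow> real \<Rightarrow> bool" where
  "stiv_feasible n K L r Y X Z \<beta> \<sigma> \<longleftrightarrow> 0 < \<sigma> \<and>
     sup_norm L (\<lambda>l. (1 / real n) * inverse (zstar n Z l) *
        (\<Sum>i<n. Z i l * (Y i - (\<Sum>k<K. X i k * \<beta> k)))) \<le> \<sigma> * r \<and>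
     Qhat n K Y X \<beta> \<le> \<sigma>\<^sup>2"

definition stiv_solution :: "nat \<Rightarrow> nat \<Rightarrow> nat \<Rightarrow> real \<Rightarrow> real \<Rightarrow> (nat \<Rightarrow> real) \<Rightarrow> (nat \<Rightarrow> nat \<Rightarrow> real)
    \<Rightarrow> (nat \<Rightarrow> nat \<Rightarrow> real) \<Rightarrow> (nat \<Rightarrow> real) \<Rightarrow> real \<Rightarrow> bool" where
  "stiv_solution n K L r c Y X Z \<beta> \<sigma> \<longleftrightarrow> stiv_feasible n K L r Y X Z \<beta> \<sigma> \<and>
     (\<forall>\<beta>' \<sigma>'. stiv_feasible n K L r Y X Z \<beta>' \<sigma>' \<longrightarrow>
        l1_norm K (\<lambda>k. xstar n X k * \<beta> k) + c * \<sigma> \<le> l1_norm K (\<lambda>k. xstar n X k * \<beta>' k) + c * \<sigma>')"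

definition stiv_bound :: "nat \<Rightarrow> nat \<Rightarrow> nat \<Rightarrow> nat \<Rightarrow> real \<Rightarrow> ereal \<Rightarrow> real \<Rightarrow> (nat \<Rightarrow> nat \<Rightarrow> real)
    \<Rightarrow> (nat \<Rightarrow> nat \<Rightarrow> real) \<Rightarrow> (nat \<Rightarrow> real) \<Rightarrow> real \<Rightarrow> nat set \<Rightarrow> ereal" where
  "stiv_bound n K L kend c p r X Z \<beta>s \<sigma> J =
     max (ereal (2 * \<sigma> * r) / kappa_p n K L X Z c p J *
            inverse (max (1 - ereal r / kappa_star n K L X Z c {..<kend} J
                            - ereal (r\<^sup>2) / kappa_star n K L X Z c {kend..<K} J) 0))
         (ereal (6 * l1_norm K (restr ({..<K} - J) (\<lambda>k. xstar n X k * \<beta>s k)) / (1 - c)))"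

definition Phi :: "real \<Rightarrow> real" where
  "Phi t = measure (density lborel std_normal_density) {..t}"

text \<open>Jing--Shao--Wang self-normalised moderate deviation bound with constant A0,
  for all independent families of random variables on the probability space M\<close>
definition jsw_constant :: "'a measure \<Rightarrow> real \<Rightarrow> bool" where
  "jsw_constant M A0 \<longleftrightarrow>
    (\<forall>(\<delta>::real) (m::nat) (X :: nat \<Rightarrow> 'a \<Rightarrow> real).
      0 < \<delta> \<and> \<delta> \<le> 1 \<and> 0 < m \<and> prob_space.indep_vars M (\<lambda>_. borel) X {..<m} \<and>
      (\<forall>i<m. integrable M (X i) \<and> integrable M (\<lambda>\<omega>. \<bar>X i \<omega>\<bar> powr (2 + \<delta>)) \<and>
              (\<integral>\<omega>. X i \<omega> \<partial>M) = 0 \<and> 0 < (\<integral>\<omega>. \<bar>X i \<omega>\<bar> powr (2 + \<delta>) \<partial>M)) \<longrightarrow>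
      (let d = sqrt (\<Sum>i<m. \<integral>\<omega>. (X i \<omega>)\<^sup>2 \<partial>M) /
               (\<Sum>i<m. \<integral>\<omega>. \<bar>X i \<omega>\<bar> powr (2 + \<delta>) \<partial>M) powr (1 / (2 + \<delta>))
       in \<forall>t. 0 \<le> t \<and> t \<le> d \<longrightarrow>
          \<bar>measure M {\<omega> \<in> space M. (\<Sum>i<m. X i \<omega>) / sqrt (\<Sum>i<m. (X i \<omega>)\<^sup>2) \<ge> t} - (1 - Phi t)\<bar>
            \<le> A0 * (1 + t) powr (1 + \<delta>) * exp (- t\<^sup>2 / 2) / d powr (2 + \<delta>)))"

text \<open>d_{n,delta} for W i l = z_{li} u_i\<close>
definition d_ndelta :: "'a measure \<Rightarrow> nat \<Rightarrow> nat \<Rightarrow> real \<Rightarrow> (nat \<Rightarrow> nat \<Rightarrow> 'a \<Rightarrow> real) \<Rightarrow> real" where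
  "d_ndelta M n L \<delta> W = Min ((\<lambda>l. sqrt (\<Sum>i<n. \<integral>\<omega>. (W i l \<omega>)\<^sup>2 \<partial>M) /
        (\<Sum>i<n. \<integral>\<omega>. \<bar>W i l \<omega>\<bar> powr (2 + \<delta>) \<partial>M) powr (1 / (2 + \<delta>))) ` {..<L})"

definition stiv_alpha :: "nat \<Rightarrow> real \<Rightarrow> real \<Rightarrow> real \<Rightarrow> real \<Rightarrow> real" where
  "stiv_alpha L A \<delta> A0 d =
     2 * real L * (1 - Phi (A * sqrt (2 * ln (real L))))
     + 2 * A0 * (1 + A * sqrt (2 * ln (real L))) powr (1 + \<delta>)
         / (real L powr (A\<^sup>2 - 1) * d powr (2 + \<delta>))"

end

theory Submission
  imports Defs
begin


lemma sup_norm_nonneg: "0 \<le> sup_norm N v"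
  unfolding sup_norm_def by (simp add: Max_ge_iff)

lemma sup_norm_ge: "l < N \<Longrightarrow> \<bar>v l\<bar> \<le> sup_norm N v"
  unfolding sup_norm_def by (simp add: Max_ge_iff)

lemma sup_norm_le: "0 \<le> b \<Longrightarrow> (\<And>l. l < N \<Longrightarrow> \<bar>v l\<bar> \<le> b) \<Longrightarrow> sup_norm N v \<le> b"
  unfolding sup_norm_def by (simp add: Max_le_iff)

lemma sup_norm_scale:
  assumes "s > 0" shows "sup_norm N (\<lambda>k. v k / s) = sup_norm N v / s"
proof -
  have m: "mono (\<lambda>x::real. x / s)" using assms by (auto intro!: monoI divide_right_mono)
  have "sup_norm N v / s = Max ((\<lambda>x. x / s) ` insert 0 ((\<lambda>k. \<bar>v k\<bar>) ` {..<N}))"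
    unfolding sup_norm_def by (rule mono_Max_commute[OF m]) auto
  also have "(\<lambda>x. x / s) ` insert 0 ((\<lambda>k. \<bar>v k\<bar>) ` {..<N}) = insert 0 ((\<lambda>k. \<bar>v k / s\<bar>) ` {..<N})"
    using assms by (auto simp: image_image)
  finally show ?thesis unfolding sup_norm_def by simp
qed

lemma l1_norm_nonneg: "0 \<le> l1_norm N v"
  unfolding l1_norm_def by (simp add: sum_nonneg)

lemma l1_norm_scale: "s > 0 \<Longrightarrow> l1_norm N (\<lambda>k. v k / s) = l1_norm N v / s"
  unfolding l1_norm_def by (simp add: sum_divide_distrib)

lemma restr_scale: "restr J (\<lambda>k. v k / s) = (\<lambda>k. restr J v k / s)"
  unfolding restr_def by auto

lemma cone_scale: assumes "\<Delta> \<in> cone K c J" "s > 0" shows "(\<lambda>k. \<Delta> k / s) \<in> cone K c J"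
proof -
  have "l1_norm K (restr ({..<K} - J) \<Delta>) / s \<le> (2 + c) / (1 - c) * l1_norm K (restr J \<Delta>) / s"
  proof -
    have h: "l1_norm K (restr ({..<K} - J) \<Delta>) \<le> (2 + c) / (1 - c) * l1_norm K (restr J \<Delta>)"
      using assms(1) by (simp add: cone_def)
    show ?thesis by (rule divide_right_mono[OF h]) (use assms in simp)
  qed
  moreover have "(2 + c) / (1 - c) * l1_norm K (restr J \<Delta>) / s = (2 + c) / (1 - c) * (l1_norm K (restr J \<Delta>) / s)"
    by simp
  ultimately show ?thesis using assms unfolding cone_def restr_scale mem_Collect_eq l1_norm_scale[OF assms(2)]
    by linarith
qed

lemma p_real: assumes "1 \<le> p" "p \<noteq> \<infinity>" shows "p = ereal (real_of_ereal p)" "1 \<le> real_of_ereal p"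
  using assms by (cases p; auto)+

lemma lp_norm_nonneg: "0 \<le> lp_norm N p v"
  unfolding lp_norm_def by (simp add: sup_norm_nonneg)

lemma lp_norm_scale:
  assumes "1 \<le> p" "s > 0" shows "lp_norm N p (\<lambda>k. v k / s) = lp_norm N p v / s"
proof (cases "p = \<infinity>")
  case True then show ?thesis using assms by (simp add: lp_norm_def sup_norm_scale)
next
  case False
  define q where "q = real_of_ereal p"
  have q: "1 \<le> q" using p_real[OF assms(1) False] q_def by simp
  have "(\<Sum>k<N. \<bar>v k / s\<bar> powr q) = (\<Sum>k<N. \<bar>v k\<bar> powr q) / s powr q"
    using assms by (simp add: powr_divide sum_divide_distrib)
  then have "(\<Sum>k<N. \<bar>v k / s\<bar> powr q) powr (1/q) = (\<Sum>k<N. \<bar>v k\<bar> powr q) powr (1/q) / (s powr q) powr (1/q)"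
    using assms by (simp add: powr_divide sum_nonneg)
  also have "(s powr q) powr (1/q) = s" using q assms by (simp add: powr_powr)
  finally show ?thesis using False unfolding lp_norm_def q_def by simp
qed

lemma lp_le_l1:
  assumes "1 \<le> p" shows "lp_norm N p v \<le> l1_norm N v"
proof (cases "p = \<infinity>")
  case True
  have "sup_norm N v \<le> l1_norm N v"
  proof (rule sup_norm_le[OF l1_norm_nonneg])
    fix l assume "l < N"
    then show "\<bar>v l\<bar> \<le> l1_norm N v" unfolding l1_norm_def
      using member_le_sum[of l "{..<N}" "\<lambda>k. \<bar>v k\<bar>"] by simp
  qed
  then show ?thesis using True by (simp add: lp_norm_def)
next
  case False
  define q where "q = real_of_ereal p"
  have q: "1 \<le> q" using p_real[OF assms(1) False] q_def by simp
  define S where "S = l1_norm N v"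
  have S0: "0 \<le> S" unfolding S_def by (rule l1_norm_nonneg)
  show ?thesis
  proof (cases "S = 0")
    case True
    then have "\<forall>k\<in>{..<N}. \<bar>v k\<bar> = 0" unfolding S_def l1_norm_def
      by (subst sum_nonneg_eq_0_iff[symmetric]) auto
    then have "(\<Sum>k<N. \<bar>v k\<bar> powr q) = 0" by simp
    then show ?thesis using False S0 True unfolding lp_norm_def q_def S_def by simp
  next
    case Sne: False
    then have Sp: "S > 0" using S0 by simp
    have le: "\<bar>v k\<bar> \<le> S" if "k < N" for k unfolding S_def l1_norm_def
      using member_le_sum[of k "{..<N}" "\<lambda>k. \<bar>v k\<bar>"] that by simp
    have "(\<bar>v k\<bar> / S) powr q \<le> \<bar>v k\<bar> / S" if "k < N" for k
    proof -
      have a: "0 \<le> \<bar>v k\<bar> / S" "\<bar>v k\<bar> / S \<le> 1" using le[OF that] Sp by auto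
      have "(\<bar>v k\<bar> / S) powr q \<le> (\<bar>v k\<bar> / S) powr 1"
        using a q by (intro powr_mono') auto
      also have "\<dots> = \<bar>v k\<bar> / S" using a Sp by (cases "v k = 0") auto
      finally show ?thesis .
    qed
    then have "(\<Sum>k<N. (\<bar>v k\<bar> / S) powr q) \<le> (\<Sum>k<N. \<bar>v k\<bar> / S)" by (intro sum_mono) auto
    also have "\<dots> = 1" using Sp unfolding S_def l1_norm_def by (simp add: sum_divide_distrib[symmetric])
    finally have "(\<Sum>k<N. \<bar>v k\<bar> powr q) / S powr q \<le> 1"
      using Sp by (simp add: powr_divide sum_divide_distrib)
    then have "(\<Sum>k<N. \<bar>v k\<bar> powr q) \<le> S powr q" using Sp by (simp add: divide_le_eq)
    then have "(\<Sum>k<N. \<bar>v k\<bar> powr q) powr (1/q) \<le> (S powr q) powr (1/q)"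
      using q by (intro powr_mono2) (auto simp: sum_nonneg)
    also have "\<dots> = S" using q Sp by (simp add: powr_powr)
    finally show ?thesis using False unfolding lp_norm_def q_def S_def by simp
  qed
qed



lemma Psi_scale: "Psi n K X Z (\<lambda>k. \<Delta> k / s) l = Psi n K X Z \<Delta> l / s"
  unfolding Psi_def by (simp add: sum_divide_distrib sum_distrib_left mult.assoc)

lemma sup_Psi_scale: "s > 0 \<Longrightarrow> sup_norm L (Psi n K X Z (\<lambda>k. \<Delta> k / s)) = sup_norm L (Psi n K X Z \<Delta>) / s"
proof -
  have "Psi n K X Z (\<lambda>k. \<Delta> k / s) = (\<lambda>l. Psi n K X Z \<Delta> l / s)" by (rule ext, rule Psi_scale)
  moreover assume "s > 0"
  ultimately show ?thesis using sup_norm_scale[of s L "Psi n K X Z \<Delta>"] by simp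
qed

lemma kappa_p_nonneg: "0 \<le> kappa_p n K L X Z c p J"
  unfolding kappa_p_def by (auto intro!: Inf_greatest simp: sup_norm_nonneg)

lemma kappa_star_nonneg: "0 \<le> kappa_star n K L X Z c J0 J"
  unfolding kappa_star_def by (auto intro!: Inf_greatest simp: sup_norm_nonneg)

lemma kappa_p_bound:
  assumes "\<Delta> \<in> cone K c J" "1 \<le> p"
  shows "kappa_p n K L X Z c p J * ereal (lp_norm K p \<Delta>) \<le> ereal (sup_norm L (Psi n K X Z \<Delta>))"
proof (cases "lp_norm K p \<Delta> = 0")
  case True then show ?thesis by (simp add: sup_norm_nonneg zero_ereal_def[symmetric])
next
  case False
  define s where "s = lp_norm K p \<Delta>"
  have s: "s > 0" using False lp_norm_nonneg[of K p \<Delta>] s_def by simp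
  have "kappa_p n K L X Z c p J \<le> ereal (sup_norm L (Psi n K X Z (\<lambda>k. \<Delta> k / s)))"
    unfolding kappa_p_def
    by (rule Inf_lower) (use s assms cone_scale lp_norm_scale s_def in auto)
  also have "\<dots> = ereal (sup_norm L (Psi n K X Z \<Delta>) / s)" using s by (simp add: sup_Psi_scale)
  finally have "kappa_p n K L X Z c p J * ereal s \<le> ereal (sup_norm L (Psi n K X Z \<Delta>) / s) * ereal s"
    by (rule ereal_mult_right_mono) (use s in simp)
  then show ?thesis using s s_def by simp
qed

lemma kappa_star_bound:
  assumes "\<Delta> \<in> cone K c J"
  shows "kappa_star n K L X Z c J0 J * ereal (l1_norm K (restr J0 \<Delta>)) \<le> ereal (sup_norm L (Psi n K X Z \<Delta>))"
proof (cases "l1_norm K (restr J0 \<Delta>) = 0")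
  case True then show ?thesis by (simp add: sup_norm_nonneg zero_ereal_def[symmetric])
next
  case False
  define s where "s = l1_norm K (restr J0 \<Delta>)"
  have s: "s > 0" using False l1_norm_nonneg[of K "restr J0 \<Delta>"] s_def by simp
  have J0: "J0 \<noteq> {}" using False unfolding l1_norm_def restr_def by auto
  have "kappa_star n K L X Z c J0 J \<le> ereal (sup_norm L (Psi n K X Z (\<lambda>k. \<Delta> k / s)))"
    unfolding kappa_star_def if_not_P[OF J0]
    by (rule Inf_lower) (use s assms cone_scale l1_norm_scale restr_scale s_def in auto)
  also have "\<dots> = ereal (sup_norm L (Psi n K X Z \<Delta>) / s)" using s by (simp add: sup_Psi_scale)
  finally have "kappa_star n K L X Z c J0 J * ereal s \<le> ereal (sup_norm L (Psi n K X Z \<Delta>) / s) * ereal s"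
    by (rule ereal_mult_right_mono) (use s in simp)
  then show ?thesis using s s_def by simp
qed



lemma sigma_real:
  fixes sh ss b C m :: real
  assumes "0 \<le> sh" "0 \<le> ss" "0 \<le> b" "0 \<le> m" "ss\<^sup>2 - 2 * C + b\<^sup>2 \<le> sh\<^sup>2" "C \<le> ss * b" "C \<le> ss * m"
  shows "ss \<le> sh + m"
proof (cases "b \<ge> m")
  case True
  have "ss * m \<le> ss * b" using True assms by (intro mult_left_mono) auto
  have "(ss - m)\<^sup>2 \<le> sh\<^sup>2"
  proof -
    have "m\<^sup>2 \<le> b\<^sup>2" using True assms by (intro power_mono) auto
    moreover have "(ss - m) * (ss - m) = ss * ss - 2 * (ss * m) + m * m" by (simp add: algebra_simps)
    ultimately show ?thesis using assms by (simp add: power2_eq_square)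
  qed
  then have "\<bar>ss - m\<bar> \<le> sh" using assms by (metis abs_le_square_iff abs_of_nonneg)
  then show ?thesis by linarith
next
  case False
  have "(ss - b) * (ss - b) = ss * ss - 2 * (ss * b) + b * b" by (simp add: algebra_simps)
  then have "(ss - b)\<^sup>2 \<le> sh\<^sup>2" using assms by (simp add: power2_eq_square)
  then have "\<bar>ss - b\<bar> \<le> sh" using assms by (metis abs_le_square_iff abs_of_nonneg)
  then show ?thesis using False by linarith
qed

lemma ratio_helper:
  fixes k :: ereal and e P q :: real
  assumes "0 \<le> k" "0 \<le> e" "0 \<le> P" "0 \<le> q" "k * ereal e \<le> ereal P" "ereal q / k \<noteq> \<infinity>"
  shows "\<exists>t. ereal q / k = ereal t \<and> 0 \<le> t \<and> q * e \<le> t * P"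
proof (cases k)
  case PInf
  then have "e = 0" using assms by (cases "e = 0") auto
  then show ?thesis using PInf by auto
next
  case MInf then show ?thesis using assms by simp
next
  case (real b)
  show ?thesis
  proof (cases "b = 0")
    case True
    then have "q = 0" using assms real by (cases "q = 0") (auto simp: zero_ereal_def[symmetric] divide_ereal_def)
    then show ?thesis using real True by (auto simp: zero_ereal_def[symmetric])
  next
    case False
    then have b: "b > 0" using assms real by simp
    have "b * e \<le> P" using assms real by simp
    then have "q * (b * e) \<le> q * P" using assms by (intro mult_left_mono) auto
    then have "q * e \<le> q / b * P" using b by (simp add: field_simps)
    then show ?thesis using real b assms by (intro exI[of _ "q / b"]) auto
  qed
qed

lemma ereal_final:
  fixes \<kappa> k1 k2 :: ereal and s P \<sigma> r e1 e2 :: real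
  assumes "0 < s" "0 < \<sigma>" "0 < r" "0 \<le> e1" "0 \<le> e2" "0 \<le> P" "0 \<le> \<kappa>" "0 \<le> k1" "0 \<le> k2"
    "\<kappa> * ereal s \<le> ereal P" "k1 * ereal e1 \<le> ereal P" "k2 * ereal e2 \<le> ereal P"
    "P \<le> r * (2 * \<sigma> + e1 + r * e2)"
  shows "ereal s \<le> ereal (2 * \<sigma> * r) / \<kappa> * inverse (max (1 - ereal r / k1 - ereal (r\<^sup>2) / k2) 0)"
proof -
  define D where "D = max (1 - ereal r / k1 - ereal (r\<^sup>2) / k2) 0"
  have D0: "0 \<le> D" unfolding D_def by simp
  have D1: "D \<le> 1" unfolding D_def using assms
        by (auto simp: max_def ereal_diff_le_self zero_le_divide_ereal intro: order_trans[OF ereal_diff_le_self])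
  have invpos: "0 < inverse D"
  proof (cases D)
    case (real d) then show ?thesis
      using D0 by (cases "d = 0") (auto simp: zero_ereal_def[symmetric])
  qed (use D0 D1 in auto)
  have kfin: "\<kappa> \<noteq> \<infinity>" using assms(1,10) by auto
  show ?thesis
  proof (cases "\<kappa> = 0")
    case True
    then have "ereal (2 * \<sigma> * r) / \<kappa> = \<infinity>" using assms by (simp add: divide_ereal_def)
    then show ?thesis using invpos unfolding D_def[symmetric] by (auto simp: ereal_mult_infty)
  next
    case False
    then obtain a where a: "\<kappa> = ereal a" "0 < a" using kfin assms(7) by (cases \<kappa>) auto
    have sa: "s \<le> P / a" using assms(10) a by (simp add: field_simps)
    have q: "ereal (2 * \<sigma> * r) / \<kappa> = ereal (2 * \<sigma> * r / a)" using a by simp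
    show ?thesis
    proof (cases "D = 0")
      case True
      then show ?thesis unfolding D_def[symmetric] q using assms a by simp
    next
      case False
      then have Dp: "0 < 1 - ereal r / k1 - ereal (r\<^sup>2) / k2" unfolding D_def by (auto simp: max_def split: if_splits)
      have nn1: "0 \<le> ereal r / k1" "0 \<le> ereal (r\<^sup>2) / k2" using assms by (auto intro: zero_le_divide_ereal)
      have f1: "ereal r / k1 \<noteq> \<infinity>" using Dp nn1 by (cases "ereal (r\<^sup>2) / k2") (auto simp: one_ereal_def)
      have f2: "ereal (r\<^sup>2) / k2 \<noteq> \<infinity>" using Dp nn1 by (cases "ereal r / k1") (auto simp: one_ereal_def)
      obtain t1 where t1: "ereal r / k1 = ereal t1" "0 \<le> t1" "r * e1 \<le> t1 * P"
        using ratio_helper[OF assms(8,4,6) _ assms(11) f1] assms by auto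
      obtain t2 where t2: "ereal (r\<^sup>2) / k2 = ereal t2" "0 \<le> t2" "r\<^sup>2 * e2 \<le> t2 * P"
        using ratio_helper[OF assms(9,5,6) _ assms(12) f2] assms by auto
      have Dr: "D = ereal (1 - t1 - t2)" "0 < 1 - t1 - t2" using Dp unfolding D_def t1 t2 by (auto simp: one_ereal_def)
      have "P \<le> 2 * \<sigma> * r + t1 * P + t2 * P" using assms(13) t1 t2 by (simp add: power2_eq_square algebra_simps)
      then have "P * (1 - t1 - t2) \<le> 2 * \<sigma> * r" by (simp add: algebra_simps)
      then have "P \<le> 2 * \<sigma> * r / (1 - t1 - t2)" using Dr by (simp add: field_simps)
      then have "s \<le> 2 * \<sigma> * r / (1 - t1 - t2) / a" using sa a by (smt (verit) divide_right_mono)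
      then show ?thesis unfolding D_def[symmetric] q Dr using Dr a by (simp add: field_simps)
    qed
  qed
qed



lemma CS_abs:
  fixes a b :: "nat \<Rightarrow> real"
  shows "\<bar>\<Sum>i\<in>I. a i * b i\<bar> \<le> sqrt (\<Sum>i\<in>I. (a i)\<^sup>2) * sqrt (\<Sum>i\<in>I. (b i)\<^sup>2)"
proof -
  have "(\<Sum>i\<in>I. a i * b i)\<^sup>2 \<le> (\<Sum>i\<in>I. (a i)\<^sup>2) * (\<Sum>i\<in>I. (b i)\<^sup>2)"
    by (rule Cauchy_Schwarz_ineq_sum)
  then have "sqrt ((\<Sum>i\<in>I. a i * b i)\<^sup>2) \<le> sqrt ((\<Sum>i\<in>I. (a i)\<^sup>2) * (\<Sum>i\<in>I. (b i)\<^sup>2))"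
    by (rule real_sqrt_le_mono)
  then show ?thesis by (simp add: real_sqrt_mult)
qed

lemma xstar_ge: "1 \<le> n \<Longrightarrow> i < n \<Longrightarrow> \<bar>X i k\<bar> \<le> xstar n X k"
  unfolding xstar_def by (rule Max_ge) auto

lemma zstar_ge: "1 \<le> n \<Longrightarrow> i < n \<Longrightarrow> \<bar>Z i l\<bar> \<le> zstar n Z l"
  unfolding zstar_def by (rule Max_ge) auto

lemma xstar_nonneg: "1 \<le> n \<Longrightarrow> 0 \<le> xstar n X k"
  using xstar_ge[of n 0 X k] by simp

lemma zstar_nonneg: "1 \<le> n \<Longrightarrow> 0 \<le> zstar n Z k"
  using zstar_ge[of n 0 Z k] by simp

lemma sq_sum_bound:
  assumes "\<And>i. i < n \<Longrightarrow> \<bar>a i\<bar> \<le> M"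
  shows "(\<Sum>i<n. (a i)\<^sup>2) \<le> real n * M\<^sup>2"
proof -
  have "(\<Sum>i<n. (a i)\<^sup>2) \<le> (\<Sum>i<n. M\<^sup>2)"
  proof (rule sum_mono)
    fix i assume "i \<in> {..<n}"
    then have "\<bar>a i\<bar> \<le> M" using assms by auto
    then have "\<bar>a i\<bar>\<^sup>2 \<le> M\<^sup>2" by (intro power_mono) auto
    then show "(a i)\<^sup>2 \<le> M\<^sup>2" by simp
  qed
  then show ?thesis by simp
qed



lemma diff_bound: "(x::real) = a - b \<Longrightarrow> \<bar>b\<bar> \<le> s * r \<Longrightarrow> \<bar>a\<bar> \<le> r * t \<Longrightarrow> \<bar>x\<bar> \<le> r * t + r * s"
  by (simp add: mult.commute abs_le_iff)

lemma det:
  fixes n K L kend :: nat and Y u :: "nat \<Rightarrow> real" and X Z :: "nat \<Rightarrow> nat \<Rightarrow> real"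
    and \<beta>s \<beta>h :: "nat \<Rightarrow> real" and \<sigma>h c r xA :: real and p :: ereal and J :: "nat set"
  assumes n: "1 \<le> n" and KL: "K \<le> L" and kend: "kend \<le> K" and c: "0 < c" "c < 1"
    and r: "r = xA / sqrt (real n)" and xA: "0 < xA"
    and model: "\<forall>i<n. Y i = (\<Sum>k<K. X i k * \<beta>s k) + u i"
    and exo: "\<forall>i<n. \<forall>l<K - kend. Z i l = X i (kend + l)"
    and good: "\<forall>l<L. \<bar>\<Sum>i<n. Z i l * u i\<bar> \<le> xA * sqrt (\<Sum>i<n. (Z i l * u i)\<^sup>2)"
    and sol: "stiv_solution n K L r c Y X Z \<beta>h \<sigma>h"
    and p: "1 \<le> p"
  shows "ereal (lp_norm K p (\<lambda>k. xstar n X k * (\<beta>h k - \<beta>s k))) \<le> stiv_bound n K L kend c p r X Z \<beta>s \<sigma>h J"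
proof -
  define xs where "xs k = xstar n X k" for k
  define d where "d k = \<beta>h k - \<beta>s k" for k
  define \<Delta> where "\<Delta> k = xs k * d k" for k
  define v where "v k = xs k * \<beta>s k" for k
  define U where "U = (\<Sum>i<n. (u i)\<^sup>2)"
  define ss where "ss = sqrt (U / real n)"
  define W where "W i = (\<Sum>k<K. X i k * d k)" for i
  have np: "0 < real n" using n by simp
  have sqn: "sqrt (real n) * sqrt (real n) = real n" by simp
  have sqnp: "0 < sqrt (real n)" using np by simp
  have U0: "0 \<le> U" unfolding U_def by (simp add: sum_nonneg)
  have ss0: "0 \<le> ss" unfolding ss_def using U0 by simp
  have ssU: "ss * sqrt (real n) = sqrt U" unfolding ss_def using np U0 by (simp add: real_sqrt_divide)
  have r0: "0 < r" using r xA np by simp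
  have xs0: "0 \<le> xs k" for k unfolding xs_def using n by (rule xstar_nonneg)
  have xsge: "\<bar>X i k\<bar> \<le> xs k" if "i < n" for i k unfolding xs_def using n that by (rule xstar_ge)
  have zsge: "\<bar>Z i l\<bar> \<le> zstar n Z l" if "i < n" for i l using n that by (rule zstar_ge)
  have zs0: "0 \<le> zstar n Z l" for l using n by (rule zstar_nonneg)
  have resid: "Y i - (\<Sum>k<K. X i k * \<beta>s k) = u i" if "i < n" for i using model that by simp
  have F3: "\<bar>(1 / real n) * (\<Sum>i<n. u i * X i k)\<bar> \<le> ss * xs k" for k
  proof -
    have "\<bar>\<Sum>i<n. u i * X i k\<bar> \<le> sqrt U * sqrt (\<Sum>i<n. (X i k)\<^sup>2)"
      unfolding U_def by (rule CS_abs)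
    also have "\<dots> \<le> sqrt U * sqrt (real n * (xs k)\<^sup>2)"
      by (intro mult_left_mono real_sqrt_le_mono sq_sum_bound xsge) (auto simp: U0)
    also have "\<dots> = sqrt U * sqrt (real n) * xs k" using xs0[of k] by (simp add: real_sqrt_mult)
    finally have "\<bar>\<Sum>i<n. u i * X i k\<bar> \<le> ss * xs k * real n"
      using ssU sqn by (metis mult.commute mult.left_commute)
    then show ?thesis using np by (simp add: abs_mult field_simps)
  qed
  have F4: "\<bar>(1 / real n) * (\<Sum>i<n. Z i l * u i)\<bar> \<le> r * ss * zstar n Z l" if "l < L" for l
  proof -
    have "\<bar>\<Sum>i<n. Z i l * u i\<bar> \<le> xA * sqrt (\<Sum>i<n. (Z i l * u i)\<^sup>2)" using good that by auto
    also have "(\<Sum>i<n. (Z i l * u i)\<^sup>2) \<le> (\<Sum>i<n. (zstar n Z l)\<^sup>2 * (u i)\<^sup>2)"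
    proof (rule sum_mono)
      fix i assume "i \<in> {..<n}"
      then have "\<bar>Z i l\<bar>\<^sup>2 \<le> (zstar n Z l)\<^sup>2" using zsge by (intro power_mono) auto
      then show "(Z i l * u i)\<^sup>2 \<le> (zstar n Z l)\<^sup>2 * (u i)\<^sup>2"
        by (simp add: power_mult_distrib mult_right_mono)
    qed
    then have "xA * sqrt (\<Sum>i<n. (Z i l * u i)\<^sup>2) \<le> xA * sqrt ((zstar n Z l)\<^sup>2 * U)"
      using xA unfolding U_def by (simp add: sum_distrib_left)
    also have "\<dots> = xA * zstar n Z l * sqrt U" using zs0[of l] by (simp add: real_sqrt_mult)
    finally have "\<bar>\<Sum>i<n. Z i l * u i\<bar> \<le> xA * zstar n Z l * sqrt U" .
    moreover have "r * ss * zstar n Z l * real n = xA * zstar n Z l * sqrt U"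
      unfolding r ssU[symmetric] using sqnp by (simp add: field_simps)
    ultimately have "\<bar>\<Sum>i<n. Z i l * u i\<bar> \<le> r * ss * zstar n Z l * real n" by linarith
    moreover have "\<bar>(1 / real n) * (\<Sum>i<n. Z i l * u i)\<bar> = \<bar>\<Sum>i<n. Z i l * u i\<bar> / real n"
      using np by (simp add: abs_mult)
    ultimately show ?thesis using np by (simp add: pos_divide_le_eq)
  qed
  have Gs: "\<bar>(1 / real n) * inverse (zstar n Z l) * (\<Sum>i<n. Z i l * (Y i - (\<Sum>k<K. X i k * \<beta>s k)))\<bar> \<le> r * ss"
    if "l < L" for l
  proof -
    have "(\<Sum>i<n. Z i l * (Y i - (\<Sum>k<K. X i k * \<beta>s k))) = (\<Sum>i<n. Z i l * u i)"
      using resid by (intro sum.cong) auto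
    then have "\<bar>(1 / real n) * inverse (zstar n Z l) * (\<Sum>i<n. Z i l * (Y i - (\<Sum>k<K. X i k * \<beta>s k)))\<bar>
       = inverse (zstar n Z l) * \<bar>(1 / real n) * (\<Sum>i<n. Z i l * u i)\<bar>"
      using zs0[of l] by (simp add: abs_mult)
    also have "\<dots> \<le> inverse (zstar n Z l) * (r * ss * zstar n Z l)"
      using F4[OF that] zs0[of l] by (intro mult_left_mono) auto
    also have "\<dots> \<le> r * ss" using zs0[of l] r0 ss0 by (cases "zstar n Z l = 0") (auto simp: field_simps)
    finally show ?thesis .
  qed
  have Qs: "Qhat n K Y X \<beta>s = ss\<^sup>2"
  proof -
    have "(\<Sum>i<n. (Y i - (\<Sum>k<K. X i k * \<beta>s k))\<^sup>2) = U" unfolding U_def using resid by (intro sum.cong) auto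
    then show ?thesis unfolding Qhat_def ss_def using U0 np by simp
  qed
  have feas: "stiv_feasible n K L r Y X Z \<beta>s \<sigma>" if "0 < \<sigma>" "ss \<le> \<sigma>" for \<sigma>
  proof -
    have "r * ss \<le> r * \<sigma>" using that r0 by simp
    have "sup_norm L (\<lambda>l. (1 / real n) * inverse (zstar n Z l) *
        (\<Sum>i<n. Z i l * (Y i - (\<Sum>k<K. X i k * \<beta>s k))))  \<le> \<sigma> * r"
    proof (rule sup_norm_le)
      show "0 \<le> \<sigma> * r" using that r0 by simp
      fix l assume "l < L"
      from Gs[OF this] \<open>r * ss \<le> r * \<sigma>\<close>
      show "\<bar>(1 / real n) * inverse (zstar n Z l) * (\<Sum>i<n. Z i l * (Y i - (\<Sum>k<K. X i k * \<beta>s k)))\<bar> \<le> \<sigma> * r"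
        by (simp only: mult.commute[of \<sigma> r])
    qed
    moreover have "Qhat n K Y X \<beta>s \<le> \<sigma>\<^sup>2" using Qs that ss0 by (simp add: power_mono)
    ultimately show ?thesis unfolding stiv_feasible_def using that by simp
  qed
  have solf: "stiv_feasible n K L r Y X Z \<beta>h \<sigma>h" using sol unfolding stiv_solution_def by simp
  then have \<sigma>h0: "0 < \<sigma>h" and Qh: "Qhat n K Y X \<beta>h \<le> \<sigma>h\<^sup>2"
    and Gh: "sup_norm L (\<lambda>l. (1 / real n) * inverse (zstar n Z l) *
        (\<Sum>i<n. Z i l * (Y i - (\<Sum>k<K. X i k * \<beta>h k)))) \<le> \<sigma>h * r"
    unfolding stiv_feasible_def by auto
  have opt: "l1_norm K (\<lambda>k. xs k * \<beta>h k) + c * \<sigma>h \<le> l1_norm K v + c * \<sigma>" if "ss < \<sigma>" for \<sigma>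
    using sol feas[of \<sigma>] that ss0 unfolding stiv_solution_def xs_def v_def by auto
  have F6: "l1_norm K (\<lambda>k. xs k * \<beta>h k) + c * \<sigma>h \<le> l1_norm K v + c * ss"
  proof (rule ccontr)
    define g where "g = l1_norm K (\<lambda>k. xs k * \<beta>h k) + c * \<sigma>h - l1_norm K v"
    assume "\<not> ?thesis"
    then have gg: "c * ss < g" unfolding g_def by simp
    have "g \<le> c * (ss + (g - c * ss) / (2 * c))" using opt[of "ss + (g - c * ss) / (2 * c)"] gg c
      unfolding g_def by simp
    also have "\<dots> = c * ss + (g - c * ss) / 2" using c by (simp add: field_simps)
    finally show False using gg by argo
  qed
  define C where "C = (1 / real n) * (\<Sum>i<n. u i * W i)"
  define b where "b = sqrt ((1 / real n) * (\<Sum>i<n. (W i)\<^sup>2))"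
  have residh: "Y i - (\<Sum>k<K. X i k * \<beta>h k) = u i - W i" if "i < n" for i
  proof -
    have "(\<Sum>k<K. X i k * \<beta>h k) = (\<Sum>k<K. X i k * \<beta>s k) + W i"
      unfolding W_def d_def by (simp add: sum.distrib[symmetric] algebra_simps)
    then show ?thesis using model that by simp
  qed
  have b0: "0 \<le> b" unfolding b_def by (simp add: sum_nonneg)
  have bsq: "b\<^sup>2 = (1 / real n) * (\<Sum>i<n. (W i)\<^sup>2)" unfolding b_def using np by (simp add: sum_nonneg)
  have Qexp: "Qhat n K Y X \<beta>h = ss\<^sup>2 - 2 * C + b\<^sup>2"
  proof -
    have "(\<Sum>i<n. (Y i - (\<Sum>k<K. X i k * \<beta>h k))\<^sup>2) = (\<Sum>i<n. (u i)\<^sup>2 - 2 * (u i * W i) + (W i)\<^sup>2)"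
      using residh by (intro sum.cong) (auto simp: power2_diff)
    also have "\<dots> = U - 2 * (\<Sum>i<n. u i * W i) + (\<Sum>i<n. (W i)\<^sup>2)"
      unfolding U_def by (simp add: sum.distrib sum_subtractf sum_distrib_left)
    finally have eq: "(\<Sum>i<n. (Y i - (\<Sum>k<K. X i k * \<beta>h k))\<^sup>2) = U - 2 * (\<Sum>i<n. u i * W i) + (\<Sum>i<n. (W i)\<^sup>2)" .
    have ssq: "ss\<^sup>2 = U / real n" unfolding ss_def using U0 np by simp
    show ?thesis unfolding Qhat_def eq bsq C_def ssq using np by (simp add: field_simps)
  qed
  have Csb: "C \<le> ss * b"
  proof -
    have "\<bar>\<Sum>i<n. u i * W i\<bar> \<le> sqrt U * sqrt (\<Sum>i<n. (W i)\<^sup>2)" unfolding U_def by (rule CS_abs)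
    moreover have "sqrt U * sqrt (\<Sum>i<n. (W i)\<^sup>2) = real n * (ss * b)"
      unfolding ss_def b_def using np U0
      by (simp add: real_sqrt_mult real_sqrt_divide sum_nonneg field_simps)
    ultimately show ?thesis unfolding C_def using np by (simp add: field_simps)
  qed
  have Cswap: "C = (\<Sum>k<K. d k * ((1 / real n) * (\<Sum>i<n. u i * X i k)))"
    unfolding C_def W_def by (simp add: sum_distrib_left sum_distrib_right sum.swap[of _ "{..<n}"] algebra_simps)
  have Delta_abs: "\<bar>\<Delta> k\<bar> = xs k * \<bar>d k\<bar>" for k unfolding \<Delta>_def using xs0[of k] by (simp add: abs_mult)
  have term1: "d k * ((1 / real n) * (\<Sum>i<n. u i * X i k)) \<le> ss * \<bar>\<Delta> k\<bar>" for k
  proof -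
    have "d k * ((1 / real n) * (\<Sum>i<n. u i * X i k)) \<le> \<bar>d k\<bar> * \<bar>(1 / real n) * (\<Sum>i<n. u i * X i k)\<bar>"
      using abs_ge_self[of "d k * ((1 / real n) * (\<Sum>i<n. u i * X i k))"] by (simp only: abs_mult)
    also have "\<dots> \<le> \<bar>d k\<bar> * (ss * xs k)" using F3[of k] by (intro mult_left_mono) auto
    finally show ?thesis using Delta_abs by (simp add: algebra_simps)
  qed
  have term2: "d k * ((1 / real n) * (\<Sum>i<n. u i * X i k)) \<le> r * ss * \<bar>\<Delta> k\<bar>" if "kend \<le> k" "k < K" for k
  proof -
    define l where "l = k - kend"
    have l: "l < K - kend" "k = kend + l" "l < L" using that KL unfolding l_def by auto
    have ZX: "Z i l = X i k" if "i < n" for i using exo that l by auto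
    have zx: "zstar n Z l = xs k" unfolding zstar_def xs_def xstar_def using ZX
      by (intro arg_cong[where f=Max] image_cong) auto
    have "(\<Sum>i<n. u i * X i k) = (\<Sum>i<n. Z i l * u i)" using ZX by (intro sum.cong) auto
    then have "\<bar>(1 / real n) * (\<Sum>i<n. u i * X i k)\<bar> \<le> r * ss * xs k" using F4[OF l(3)] zx by simp
    then have "d k * ((1 / real n) * (\<Sum>i<n. u i * X i k)) \<le> \<bar>d k\<bar> * (r * ss * xs k)"
    proof -
      have "d k * ((1 / real n) * (\<Sum>i<n. u i * X i k)) \<le> \<bar>d k\<bar> * \<bar>(1 / real n) * (\<Sum>i<n. u i * X i k)\<bar>"
        using abs_ge_self[of "d k * ((1 / real n) * (\<Sum>i<n. u i * X i k))"] by (simp only: abs_mult)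
      also have "\<dots> \<le> \<bar>d k\<bar> * (r * ss * xs k)" using \<open>\<bar>(1 / real n) * (\<Sum>i<n. u i * X i k)\<bar> \<le> r * ss * xs k\<close>
        by (intro mult_left_mono) auto
      finally show ?thesis .
    qed
    then show ?thesis using Delta_abs by (simp add: algebra_simps)
  qed
  define e1 where "e1 = l1_norm K (restr {..<kend} \<Delta>)"
  define e2 where "e2 = l1_norm K (restr {kend..<K} \<Delta>)"
  have e1_0: "0 \<le> e1" unfolding e1_def by (rule l1_norm_nonneg)
  have e2_0: "0 \<le> e2" unfolding e2_def by (rule l1_norm_nonneg)
  have C1: "C \<le> ss * l1_norm K \<Delta>"
  proof -
    have "C \<le> (\<Sum>k<K. ss * \<bar>\<Delta> k\<bar>)" unfolding Cswap by (rule sum_mono) (rule term1)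
    then show ?thesis by (simp add: l1_norm_def sum_distrib_left)
  qed
  have C2: "C \<le> ss * (e1 + r * e2)"
  proof -
    have "C \<le> (\<Sum>k<K. if k < kend then ss * \<bar>\<Delta> k\<bar> else r * ss * \<bar>\<Delta> k\<bar>)"
      unfolding Cswap
    proof (rule sum_mono)
      fix k assume "k \<in> {..<K}"
      then show "d k * ((1 / real n) * (\<Sum>i<n. u i * X i k))
          \<le> (if k < kend then ss * \<bar>\<Delta> k\<bar> else r * ss * \<bar>\<Delta> k\<bar>)"
        using term1[of k] term2[of k] by auto
    qed
    also have "\<dots> = ss * e1 + r * ss * e2"
      unfolding e1_def e2_def l1_norm_def restr_def sum_distrib_left sum.distrib[symmetric]
      by (intro sum.cong) auto
    finally show ?thesis by (simp add: algebra_simps)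
  qed
  have S1: "ss \<le> \<sigma>h + l1_norm K \<Delta>"
    by (rule sigma_real[OF _ ss0 b0 l1_norm_nonneg _ Csb C1]) (use \<sigma>h0 Qh Qexp in auto)
  have S2: "ss \<le> \<sigma>h + (e1 + r * e2)"
    by (rule sigma_real[OF _ ss0 b0 _ _ Csb C2]) (use \<sigma>h0 Qh Qexp e1_0 e2_0 r0 in auto)
  define P where "P = sup_norm L (Psi n K X Z \<Delta>)"
  have P0: "0 \<le> P" unfolding P_def by (rule sup_norm_nonneg)
  have Pb: "P \<le> r * ss + r * \<sigma>h"
    unfolding P_def
  proof (rule sup_norm_le)
    show "0 \<le> r * ss + r * \<sigma>h" using r0 ss0 \<sigma>h0 by simp
    fix l assume l: "l < L"
    have inner: "(\<Sum>k<K. X i k * inverse (xstar n X k) * \<Delta> k) = W i" if "i < n" for i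
      unfolding W_def
    proof (rule sum.cong)
      fix k assume "k \<in> {..<K}"
      show "X i k * inverse (xstar n X k) * \<Delta> k = X i k * d k"
      proof (cases "xs k = 0")
        case True then have "X i k = 0" using xsge[OF that, of k] by simp
        then show ?thesis by simp
      next
        case False then show ?thesis unfolding \<Delta>_def xs_def by simp
      qed
    qed simp
    have eqS: "(\<Sum>i<n. Z i l * (\<Sum>k<K. X i k * inverse (xstar n X k) * \<Delta> k))
        = (\<Sum>i<n. Z i l * (Y i - (\<Sum>k<K. X i k * \<beta>s k))) - (\<Sum>i<n. Z i l * (Y i - (\<Sum>k<K. X i k * \<beta>h k)))"
      unfolding sum_subtractf[symmetric]
    proof (rule sum.cong[OF refl])
      fix i assume "i \<in> {..<n}"
      then have i: "i < n" by simp
      have "(Y i - (\<Sum>k<K. X i k * \<beta>s k)) - (Y i - (\<Sum>k<K. X i k * \<beta>h k)) = W i"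
        using resid[OF i] residh[OF i] by simp
      then show "Z i l * (\<Sum>k<K. X i k * inverse (xstar n X k) * \<Delta> k)
          = Z i l * (Y i - (\<Sum>k<K. X i k * \<beta>s k)) - Z i l * (Y i - (\<Sum>k<K. X i k * \<beta>h k))"
        using inner[OF i] by (simp add: right_diff_distrib[symmetric])
    qed
    have "Psi n K X Z \<Delta> l = (1 / real n) * inverse (zstar n Z l) * (\<Sum>i<n. Z i l * (Y i - (\<Sum>k<K. X i k * \<beta>s k)))
        - (1 / real n) * inverse (zstar n Z l) * (\<Sum>i<n. Z i l * (Y i - (\<Sum>k<K. X i k * \<beta>h k)))"
      unfolding Psi_def eqS by (simp only: right_diff_distrib)
    moreover have "\<bar>(1 / real n) * inverse (zstar n Z l) * (\<Sum>i<n. Z i l * (Y i - (\<Sum>k<K. X i k * \<beta>h k)))\<bar> \<le> \<sigma>h * r"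
      using sup_norm_ge[OF l, of "\<lambda>l. (1 / real n) * inverse (zstar n Z l) *
        (\<Sum>i<n. Z i l * (Y i - (\<Sum>k<K. X i k * \<beta>h k)))"] Gh by simp
    ultimately show "\<bar>Psi n K X Z \<Delta> l\<bar> \<le> r * ss + r * \<sigma>h" using Gs[OF l] by (rule diff_bound)
  qed
  define D1 where "D1 = l1_norm K (restr J \<Delta>)"
  define D2 where "D2 = l1_norm K (restr ({..<K} - J) \<Delta>)"
  define V2 where "V2 = l1_norm K (restr ({..<K} - J) v)"
  have V20: "0 \<le> V2" unfolding V2_def by (rule l1_norm_nonneg)
  have l1D: "l1_norm K \<Delta> = D1 + D2" unfolding D1_def D2_def l1_norm_def restr_def sum.distrib[symmetric]
    by (intro sum.cong) auto
  have key: "(1 - c) * D2 \<le> (1 + c) * D1 + 2 * V2"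
  proof -
    define V1 where "V1 = l1_norm K (restr J v)"
    have l1v: "l1_norm K v = V1 + V2" unfolding V1_def V2_def l1_norm_def restr_def sum.distrib[symmetric]
      by (intro sum.cong) auto
    have xb: "(\<lambda>k. xs k * \<beta>h k) = (\<lambda>k. v k + \<Delta> k)" unfolding v_def \<Delta>_def d_def by (auto simp: algebra_simps)
    have "V1 - D1 + D2 - V2 \<le> l1_norm K (\<lambda>k. xs k * \<beta>h k)"
      unfolding xb V1_def V2_def D1_def D2_def l1_norm_def restr_def sum_subtractf[symmetric] sum.distrib[symmetric]
      by (intro sum_mono) auto
    moreover have "c * ss \<le> c * (\<sigma>h + (D1 + D2))" using S1 l1D c by (intro mult_left_mono) auto
    ultimately show ?thesis using F6 l1v by (simp add: algebra_simps)
  qed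
  have lpD: "lp_norm K p \<Delta> \<le> D1 + D2" using lp_le_l1[OF p, of K \<Delta>] l1D by simp
  have tgt: "(\<lambda>k. xstar n X k * (\<beta>h k - \<beta>s k)) = \<Delta>" unfolding \<Delta>_def xs_def d_def by simp
  have vJ: "restr ({..<K} - J) (\<lambda>k. xstar n X k * \<beta>s k) = restr ({..<K} - J) v" unfolding v_def xs_def by simp
  show ?thesis
  proof (cases "\<Delta> \<in> cone K c J")
    case False
    then have "(2 + c) / (1 - c) * D1 < D2" unfolding cone_def D1_def D2_def by auto
    then have "(2 + c) * D1 < (1 - c) * D2" using c by (simp add: field_simps)
    then have "(1 - c) * (D1 + D2) \<le> 6 * V2" using key c by (simp add: algebra_simps)
    then have "D1 + D2 \<le> 6 * V2 / (1 - c)" using c by (simp add: field_simps)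
    then have "ereal (lp_norm K p \<Delta>) \<le> ereal (6 * V2 / (1 - c))" using lpD by simp
    then show ?thesis unfolding stiv_bound_def tgt vJ V2_def[symmetric] by (simp add: le_max_iff_disj)
  next
    case True
    show ?thesis
    proof (cases "lp_norm K p \<Delta> = 0")
      case True
      have "ereal (lp_norm K p \<Delta>) \<le> ereal (6 * V2 / (1 - c))" using True V20 c by simp
      then show ?thesis unfolding stiv_bound_def tgt vJ V2_def[symmetric] by (simp add: le_max_iff_disj)
    next
      case False
      have s0: "0 < lp_norm K p \<Delta>" using False lp_norm_nonneg[of K p \<Delta>] by simp
      have "ereal (lp_norm K p \<Delta>) \<le> ereal (2 * \<sigma>h * r) / kappa_p n K L X Z c p J *
          inverse (max (1 - ereal r / kappa_star n K L X Z c {..<kend} J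
                            - ereal (r\<^sup>2) / kappa_star n K L X Z c {kend..<K} J) 0)"
      proof (rule ereal_final[OF s0 \<sigma>h0 r0 e1_0 e2_0 P0 kappa_p_nonneg kappa_star_nonneg kappa_star_nonneg])
        show "kappa_p n K L X Z c p J * ereal (lp_norm K p \<Delta>) \<le> ereal P"
          unfolding P_def by (rule kappa_p_bound[OF True p])
        show "kappa_star n K L X Z c {..<kend} J * ereal e1 \<le> ereal P"
          unfolding P_def e1_def by (rule kappa_star_bound[OF True])
        show "kappa_star n K L X Z c {kend..<K} J * ereal e2 \<le> ereal P"
          unfolding P_def e2_def by (rule kappa_star_bound[OF True])
        have "r * ss \<le> r * (\<sigma>h + (e1 + r * e2))" using S2 r0 by (intro mult_left_mono) auto
        then show "P \<le> r * (2 * \<sigma>h + e1 + r * e2)" using Pb by (simp add: algebra_simps)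
      qed
      then show ?thesis unfolding stiv_bound_def tgt by (simp add: le_max_iff_disj)
    qed
  qed
qed



lemma sq_le_powr: "0 < (\<delta>::real) \<Longrightarrow> (x::real)\<^sup>2 \<le> 1 + \<bar>x\<bar> powr (2 + \<delta>)"
proof (cases "\<bar>x\<bar> \<le> 1")
  case True
  then have "x\<^sup>2 \<le> 1" by (simp add: abs_le_square_iff[symmetric] abs_square_le_1)
  moreover have "0 \<le> \<bar>x\<bar> powr (2 + \<delta>)" by simp
  ultimately show ?thesis by linarith
next
  case False
  then have "\<bar>x\<bar> powr 2 \<le> \<bar>x\<bar> powr (2 + \<delta>)" if "0 < \<delta>" using that by (intro powr_mono) auto
  moreover have "\<bar>x\<bar> powr 2 = x\<^sup>2" using False by (simp add: powr_numeral)
  ultimately show ?thesis if "0 < \<delta>" using that by simp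
qed

lemma sq_integrable:
  fixes f :: "'a \<Rightarrow> real" and \<delta> :: real
  assumes "prob_space M" "f \<in> borel_measurable M" "integrable M (\<lambda>\<omega>. \<bar>f \<omega>\<bar> powr (2 + \<delta>))" "0 < \<delta>"
  shows "integrable M (\<lambda>\<omega>. (f \<omega>)\<^sup>2)"
proof -
  interpret prob_space M by fact
  have i1: "integrable M (\<lambda>\<omega>. 1 + \<bar>f \<omega>\<bar> powr (2 + \<delta>))" using assms(3) by simp
  have i2: "(\<lambda>\<omega>. (f \<omega>)\<^sup>2) \<in> borel_measurable M" using assms(2) by measurable
  have i3: "AE x in M. norm ((f x)\<^sup>2) \<le> norm (1 + \<bar>f x\<bar> powr (2 + \<delta>))"
    using sq_le_powr assms(4) by (intro AE_I2) (simp add: add_nonneg_nonneg)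
  show ?thesis by (rule Bochner_Integration.integrable_bound[OF i1 i2 i3])
qed

lemma pos_integral:
  fixes g :: "'a \<Rightarrow> real"
  assumes "integrable M g" "\<And>\<omega>. 0 \<le> g \<omega>" "\<not> (AE \<omega> in M. g \<omega> = 0)"
  shows "0 < (\<integral>\<omega>. g \<omega> \<partial>M)"
proof -
  have "(\<integral>\<omega>. g \<omega> \<partial>M) \<noteq> 0" using integral_nonneg_eq_0_iff_AE[OF assms(1)] assms by auto
  moreover have "0 \<le> (\<integral>\<omega>. g \<omega> \<partial>M)" using assms by (intro integral_nonneg_AE) auto
  ultimately show ?thesis by simp
qed



lemma cont_ev: "continuous_on UNIV (\<lambda>t::real \<times> (nat \<Rightarrow> real) \<times> (nat \<Rightarrow> real) \<times> real. fst (snd (snd t)) l)"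
proof -
  have "continuous_on UNIV (\<lambda>t::real \<times> (nat \<Rightarrow> real) \<times> (nat \<Rightarrow> real) \<times> real. fst (snd (snd t)))"
    by (intro continuous_intros)
  moreover have "continuous_on (range (\<lambda>t::real \<times> (nat \<Rightarrow> real) \<times> (nat \<Rightarrow> real) \<times> real. fst (snd (snd t)))) (\<lambda>f::nat\<Rightarrow>real. f l)"
    using continuous_on_product_coordinates continuous_on_subset subset_UNIV by metis
  ultimately show ?thesis using continuous_on_compose[of UNIV "\<lambda>t::real \<times> (nat \<Rightarrow> real) \<times> (nat \<Rightarrow> real) \<times> real. fst (snd (snd t))" "\<lambda>f. f l"]
    by (simp add: comp_def)
qed

lemma meas_f: "(\<lambda>t::real \<times> (nat \<Rightarrow> real) \<times> (nat \<Rightarrow> real) \<times> real. fst (snd (snd t)) l * snd (snd (snd t))) \<in> borel_measurable borel"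
  by (intro borel_measurable_continuous_onI continuous_intros cont_ev)

lemma meas_g: "(\<lambda>t::real \<times> (nat \<Rightarrow> real) \<times> (nat \<Rightarrow> real) \<times> real. - (fst (snd (snd t)) l * snd (snd (snd t)))) \<in> borel_measurable borel"
  by (intro borel_measurable_continuous_onI continuous_intros cont_ev)


lemma jsw_use:
  fixes M :: "'a measure" and m :: nat and X :: "nat \<Rightarrow> 'a \<Rightarrow> real" and \<delta> t dd A0 :: real
  assumes jsw: "jsw_constant M A0" and h: "0 < \<delta>" "\<delta> \<le> 1" "0 < m"
    "prob_space.indep_vars M (\<lambda>_. borel) X {..<m}"
    "\<forall>i<m. integrable M (X i) \<and> integrable M (\<lambda>\<omega>. \<bar>X i \<omega>\<bar> powr (2 + \<delta>)) \<and>
       (\<integral>\<omega>. X i \<omega> \<partial>M) = 0 \<and> 0 < (\<integral>\<omega>. \<bar>X i \<omega>\<bar> powr (2 + \<delta>) \<partial>M)"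
    and t: "0 \<le> t" "t \<le> dd"
    and dd: "dd = sqrt (\<Sum>i<m. \<integral>\<omega>. (X i \<omega>)\<^sup>2 \<partial>M) /
               (\<Sum>i<m. \<integral>\<omega>. \<bar>X i \<omega>\<bar> powr (2 + \<delta>) \<partial>M) powr (1 / (2 + \<delta>))"
  shows "\<bar>measure M {\<omega> \<in> space M. (\<Sum>i<m. X i \<omega>) / sqrt (\<Sum>i<m. (X i \<omega>)\<^sup>2) \<ge> t} - (1 - Phi t)\<bar>
            \<le> A0 * (1 + t) powr (1 + \<delta>) * exp (- t\<^sup>2 / 2) / dd powr (2 + \<delta>)"
proof -
  have "let d = sqrt (\<Sum>i<m. \<integral>\<omega>. (X i \<omega>)\<^sup>2 \<partial>M) /
               (\<Sum>i<m. \<integral>\<omega>. \<bar>X i \<omega>\<bar> powr (2 + \<delta>) \<partial>M) powr (1 / (2 + \<delta>))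
       in \<forall>t. 0 \<le> t \<and> t \<le> d \<longrightarrow>
          \<bar>measure M {\<omega> \<in> space M. (\<Sum>i<m. X i \<omega>) / sqrt (\<Sum>i<m. (X i \<omega>)\<^sup>2) \<ge> t} - (1 - Phi t)\<bar>
            \<le> A0 * (1 + t) powr (1 + \<delta>) * exp (- t\<^sup>2 / 2) / d powr (2 + \<delta>)"
  proof (rule jsw[unfolded jsw_constant_def, THEN spec[of _ \<delta>], THEN spec[of _ m], THEN spec[of _ X], THEN mp])
    show "0 < \<delta> \<and> \<delta> \<le> 1 \<and> 0 < m \<and> prob_space.indep_vars M (\<lambda>_. borel) X {..<m} \<and>
      (\<forall>i<m. integrable M (X i) \<and> integrable M (\<lambda>\<omega>. \<bar>X i \<omega>\<bar> powr (2 + \<delta>)) \<and>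
              (\<integral>\<omega>. X i \<omega> \<partial>M) = 0 \<and> 0 < (\<integral>\<omega>. \<bar>X i \<omega>\<bar> powr (2 + \<delta>) \<partial>M))"
      using h by simp
  qed
  then have "\<forall>t. 0 \<le> t \<and> t \<le> dd \<longrightarrow>
          \<bar>measure M {\<omega> \<in> space M. (\<Sum>i<m. X i \<omega>) / sqrt (\<Sum>i<m. (X i \<omega>)\<^sup>2) \<ge> t} - (1 - Phi t)\<bar>
            \<le> A0 * (1 + t) powr (1 + \<delta>) * exp (- t\<^sup>2 / 2) / dd powr (2 + \<delta>)"
    unfolding Let_def dd .
  then show ?thesis using t by simp
qed

lemma gen_alg: "(L::real) * ex = 1 / lp \<Longrightarrow> L * (2 * (a + b * ex / dp)) = 2 * L * a + 2 * b / (lp * dp)"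
proof -
  assume h: "L * ex = 1 / lp"
  have "L * (2 * (a + b * ex / dp)) = 2 * L * a + 2 * b * (L * ex) / dp" by (simp add: algebra_simps)
  then show ?thesis using h by simp
qed

lemma alpha_alg:
  fixes L :: nat and A x A0 \<delta> d :: real
  assumes L: "1 \<le> L" and x: "x = A * sqrt (2 * ln (real L))"
  shows "real L * (2 * ((1 - Phi x) + A0 * (1 + x) powr (1 + \<delta>) * exp (- x\<^sup>2 / 2) / d powr (2 + \<delta>)))
     = stiv_alpha L A \<delta> A0 d"
proof -
  have L0: "0 < real L" using L by simp
  have lnL: "0 \<le> ln (real L)" using L by simp
  have x2: "x\<^sup>2 = A\<^sup>2 * (2 * ln (real L))" unfolding x using lnL by (simp add: power_mult_distrib)
  have e: "real L * exp (- x\<^sup>2 / 2) * real L powr (A\<^sup>2 - 1) = 1"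
  proof -
    have "real L * exp (- x\<^sup>2 / 2) * real L powr (A\<^sup>2 - 1)
        = exp (ln (real L)) * exp (- (A\<^sup>2 * ln (real L))) * exp ((A\<^sup>2 - 1) * ln (real L))"
      using L0 unfolding x2 by (simp add: powr_def)
    also have "\<dots> = exp (ln (real L) + - (A\<^sup>2 * ln (real L)) + (A\<^sup>2 - 1) * ln (real L))"
      by (simp only: exp_add)
    also have "\<dots> = 1" by (simp add: algebra_simps)
    finally show ?thesis .
  qed
  have p0: "0 < real L powr (A\<^sup>2 - 1)" using L0 by simp
  have E: "real L * exp (- x\<^sup>2 / 2) = 1 / real L powr (A\<^sup>2 - 1)" using e p0 by (simp add: field_simps)
  show ?thesis unfolding stiv_alpha_def x[symmetric] gen_alg[OF E] by (simp only: mult.assoc)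
qed

theorem theorem4:
  fixes M :: "'a measure" and n K L kend :: nat
    and y u :: "'a \<Rightarrow> nat \<Rightarrow> real" and x z :: "'a \<Rightarrow> nat \<Rightarrow> nat \<Rightarrow> real"
    and \<beta>s :: "nat \<Rightarrow> real" and \<delta> A A0 c :: real and p :: ereal
  assumes M: "prob_space M"
    and dims: "1 \<le> n" "1 \<le> K" "K \<le> L" "kend \<le> K"
    and c: "0 < c" "c < 1"
    and model: "\<forall>\<omega>\<in>space M. \<forall>i<n. y \<omega> i = (\<Sum>k<K. x \<omega> i k * \<beta>s k) + u \<omega> i"
    and exo: "\<forall>\<omega>\<in>space M. \<forall>i<n. \<forall>l<K - kend. z \<omega> i l = x \<omega> i (kend + l)"
    and indep: "prob_space.indep_vars M (\<lambda>_. borel)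
       (\<lambda>i \<omega>. (y \<omega> i, (\<lambda>k. if k < K then x \<omega> i k else 0),
                (\<lambda>l. if l < L then z \<omega> i l else 0), u \<omega> i)) {..<n}"
    and A1: "\<forall>i<n. \<forall>l<L. integrable M (\<lambda>\<omega>. z \<omega> i l * u \<omega> i)
              \<and> integrable M (\<lambda>\<omega>. \<bar>z \<omega> i l * u \<omega> i\<bar> powr (2 + \<delta>))
              \<and> (\<integral>\<omega>. z \<omega> i l * u \<omega> i \<partial>M) = 0
              \<and> \<not> (AE \<omega> in M. z \<omega> i l * u \<omega> i = 0)"
    and \<delta>: "0 < \<delta>" "\<delta> \<le> 1"
    and A: "1 \<le> A"
    and jsw: "jsw_constant M A0"
    and Lbound: "real L \<le> exp ((d_ndelta M n L \<delta> (\<lambda>i l \<omega>. z \<omega> i l * u \<omega> i))\<^sup>2 / (2 * A\<^sup>2))"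
    and p: "1 \<le> p"
  shows "\<exists>E\<in>sets M.
     measure M E \<ge> 1 - stiv_alpha L A \<delta> A0 (d_ndelta M n L \<delta> (\<lambda>i l \<omega>. z \<omega> i l * u \<omega> i)) \<and>
     (\<forall>\<omega>\<in>E. \<forall>\<beta>h \<sigma>h.
        stiv_solution n K L (A * sqrt (2 * ln (real L) / real n)) c (y \<omega>) (x \<omega>) (z \<omega>) \<beta>h \<sigma>h \<longrightarrow>
        ereal (lp_norm K p (\<lambda>k. xstar n (x \<omega>) k * (\<beta>h k - \<beta>s k)))
          \<le> Min ((\<lambda>J. stiv_bound n K L kend c p (A * sqrt (2 * ln (real L) / real n))
                       (x \<omega>) (z \<omega>) \<beta>s \<sigma>h J) ` Pow {..<K}))"
proof -
  interpret prob_space M by (rule M)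
  define xA where "xA = A * sqrt (2 * ln (real L))"
  define r where "r = A * sqrt (2 * ln (real L) / real n)"
  define W where "W l i \<omega> = z \<omega> i l * u \<omega> i" for l i \<omega>
  define T where "T = (\<lambda>i \<omega>. (y \<omega> i, (\<lambda>k. if k < K then x \<omega> i k else 0),
                (\<lambda>l. if l < L then z \<omega> i l else 0), u \<omega> i))"
  define F where "F l t = fst (snd (snd t)) l * snd (snd (snd t))"
    for l and t :: "real \<times> (nat \<Rightarrow> real) \<times> (nat \<Rightarrow> real) \<times> real"
  have L1: "1 \<le> L" using dims by simp
  have np: "0 < n" using dims by simp
  have indepT: "indep_vars (\<lambda>_. borel) T {..<n}" using indep unfolding T_def .
  have measT: "T i \<in> borel_measurable M" if "i < n" for i
    using indepT that unfolding indep_vars_def by auto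
  have TW: "(\<lambda>i \<omega>. F l (T i \<omega>)) = W l" if "l < L" for l
    using that unfolding F_def T_def W_def by (auto intro!: ext)
  have TWn: "(\<lambda>i \<omega>. - F l (T i \<omega>)) = (\<lambda>i \<omega>. - W l i \<omega>)" if "l < L" for l
    using that unfolding F_def T_def W_def by (auto intro!: ext)
  have measF: "F l \<in> borel_measurable borel" for l unfolding F_def[abs_def] by (rule meas_f)
  have measFn: "(\<lambda>t. - F l t) \<in> borel_measurable borel" for l unfolding F_def[abs_def] by (rule meas_g)
  have measW: "W l i \<in> borel_measurable M" if "l < L" "i < n" for l i
  proof -
    have "(\<lambda>\<omega>. F l (T i \<omega>)) \<in> borel_measurable M"
      using measurable_comp[OF measT[OF that(2)] measF[of l]] by (simp add: comp_def)
    then show ?thesis using TW[OF that(1)] by metis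
  qed
  have indW: "indep_vars (\<lambda>_. borel) (W l) {..<n}" if "l < L" for l
    using indep_vars_compose2[OF indepT, of "\<lambda>_. F l" "\<lambda>_. borel"] measF TW[OF that] by simp
  have indWn: "indep_vars (\<lambda>_. borel) (\<lambda>i \<omega>. - W l i \<omega>) {..<n}" if "l < L" for l
    using indep_vars_compose2[OF indepT, of "\<lambda>_ t. - F l t" "\<lambda>_. borel"] measFn TWn[OF that] by simp
  have mom: "integrable M (W l i) \<and> integrable M (\<lambda>\<omega>. \<bar>W l i \<omega>\<bar> powr (2 + \<delta>)) \<and>
       (\<integral>\<omega>. W l i \<omega> \<partial>M) = 0 \<and> \<not> (AE \<omega> in M. W l i \<omega> = 0)" if "l < L" "i < n" for l i
    using A1 that unfolding W_def by auto
  have posP: "0 < (\<integral>\<omega>. \<bar>W l i \<omega>\<bar> powr (2 + \<delta>) \<partial>M)" if "l < L" "i < n" for l i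
  proof (rule pos_integral)
    show "integrable M (\<lambda>\<omega>. \<bar>W l i \<omega>\<bar> powr (2 + \<delta>))" using mom[OF that] by simp
    show "\<not> (AE \<omega> in M. \<bar>W l i \<omega>\<bar> powr (2 + \<delta>) = 0)" using mom[OF that] by simp
  qed simp
  have sqint: "integrable M (\<lambda>\<omega>. (W l i \<omega>)\<^sup>2)" if "l < L" "i < n" for l i
    using sq_integrable[OF M measW[OF that] _ \<delta>(1)] mom[OF that] by simp
  have posS: "0 < (\<integral>\<omega>. (W l i \<omega>)\<^sup>2 \<partial>M)" if "l < L" "i < n" for l i
  proof (rule pos_integral)
    show "integrable M (\<lambda>\<omega>. (W l i \<omega>)\<^sup>2)" by (rule sqint[OF that])
    show "\<not> (AE \<omega> in M. (W l i \<omega>)\<^sup>2 = 0)" using mom[OF that] by simp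
  qed simp
  define dl where "dl l = sqrt (\<Sum>i<n. \<integral>\<omega>. (W l i \<omega>)\<^sup>2 \<partial>M) /
        (\<Sum>i<n. \<integral>\<omega>. \<bar>W l i \<omega>\<bar> powr (2 + \<delta>) \<partial>M) powr (1 / (2 + \<delta>))" for l
  have dlpos: "0 < dl l" if "l < L" for l
  proof -
    have "0 < (\<Sum>i<n. \<integral>\<omega>. (W l i \<omega>)\<^sup>2 \<partial>M)" using posS[OF that] np by (intro sum_pos) auto
    moreover have "0 < (\<Sum>i<n. \<integral>\<omega>. \<bar>W l i \<omega>\<bar> powr (2 + \<delta>) \<partial>M)" using posP[OF that] np by (intro sum_pos) auto
    ultimately show ?thesis unfolding dl_def by simp
  qed
  define d where "d = d_ndelta M n L \<delta> (\<lambda>i l \<omega>. z \<omega> i l * u \<omega> i)"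
  have d_eq: "d = Min (dl ` {..<L})" unfolding d_def d_ndelta_def dl_def W_def by simp
  have d_le: "d \<le> dl l" if "l < L" for l unfolding d_eq using that by simp
  have dpos: "0 < d"
  proof -
    have z0: "0 \<in> {..<L}" using L1 by simp
    have "d \<in> dl ` {..<L}" unfolding d_eq by (intro Min_in) (simp, use z0 in blast)
    then show ?thesis using dlpos by auto
  qed
  have lnL: "0 \<le> ln (real L)" using L1 by simp
  have xA0: "0 \<le> xA" unfolding xA_def using A lnL by simp
  have xAd: "xA \<le> d"
  proof -
    have "ln (real L) \<le> ln (exp (d\<^sup>2 / (2 * A\<^sup>2)))"
      using Lbound L1 unfolding d_def by (subst ln_le_cancel_iff) auto
    then have "ln (real L) \<le> d\<^sup>2 / (2 * A\<^sup>2)" by simp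
    then have "A\<^sup>2 * (2 * ln (real L)) \<le> d\<^sup>2" using A by (simp add: field_simps)
    moreover have "xA\<^sup>2 = A\<^sup>2 * (2 * ln (real L))" unfolding xA_def using lnL by (simp add: power_mult_distrib)
    ultimately have "xA\<^sup>2 \<le> d\<^sup>2" by simp
    then show ?thesis using xA0 dpos by (simp add: power2_le_iff_abs_le)
  qed
  define SA where "SA l \<omega> = (\<Sum>i<n. W l i \<omega>) / sqrt (\<Sum>i<n. (W l i \<omega>)\<^sup>2)" for l \<omega>
  define SB where "SB l \<omega> = (\<Sum>i<n. - W l i \<omega>) / sqrt (\<Sum>i<n. (- W l i \<omega>)\<^sup>2)" for l \<omega>
  define Aev where "Aev l = {\<omega> \<in> space M. (\<Sum>i<n. W l i \<omega>) / sqrt (\<Sum>i<n. (W l i \<omega>)\<^sup>2) \<ge> xA}" for l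
  define Bev where "Bev l = {\<omega> \<in> space M. (\<Sum>i<n. - W l i \<omega>) / sqrt (\<Sum>i<n. (- W l i \<omega>)\<^sup>2) \<ge> xA}" for l
  define Tb where "Tb = A0 * (1 + xA) powr (1 + \<delta>) * exp (- xA\<^sup>2 / 2) / d powr (2 + \<delta>)"
  have hypA: "\<forall>i<n. integrable M (W l i) \<and> integrable M (\<lambda>\<omega>. \<bar>W l i \<omega>\<bar> powr (2 + \<delta>)) \<and>
       (\<integral>\<omega>. W l i \<omega> \<partial>M) = 0 \<and> 0 < (\<integral>\<omega>. \<bar>W l i \<omega>\<bar> powr (2 + \<delta>) \<partial>M)" if "l < L" for l
    using mom posP that by auto
  have hypB: "\<forall>i<n. integrable M (\<lambda>\<omega>. - W l i \<omega>) \<and> integrable M (\<lambda>\<omega>. \<bar>- W l i \<omega>\<bar> powr (2 + \<delta>)) \<and>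
       (\<integral>\<omega>. - W l i \<omega> \<partial>M) = 0 \<and> 0 < (\<integral>\<omega>. \<bar>- W l i \<omega>\<bar> powr (2 + \<delta>) \<partial>M)" if "l < L" for l
    using mom posP that by auto
  have jA: "\<bar>measure M (Aev l) - (1 - Phi xA)\<bar> \<le> A0 * (1 + xA) powr (1 + \<delta>) * exp (- xA\<^sup>2 / 2) / dl l powr (2 + \<delta>)"
    if "l < L" for l
    unfolding Aev_def
    by (rule jsw_use[OF jsw \<delta> np indW[OF that] hypA[OF that] xA0 order_trans[OF xAd d_le[OF that]]])
       (simp add: dl_def)
  have jB: "\<bar>measure M (Bev l) - (1 - Phi xA)\<bar> \<le> A0 * (1 + xA) powr (1 + \<delta>) * exp (- xA\<^sup>2 / 2) / dl l powr (2 + \<delta>)"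
    if "l < L" for l
    unfolding Bev_def
    by (rule jsw_use[OF jsw \<delta> np indWn[OF that] hypB[OF that] xA0 order_trans[OF xAd d_le[OF that]]])
       (simp add: dl_def)
  have K1: "0 < (1 + xA) powr (1 + \<delta>) * exp (- xA\<^sup>2 / 2)" using xA0 by simp
  have A00: "0 \<le> A0"
  proof -
    have "0 \<le> A0 * (1 + xA) powr (1 + \<delta>) * exp (- xA\<^sup>2 / 2) / dl 0 powr (2 + \<delta>)"
      using jA[of 0] L1 by (meson abs_ge_zero order_trans less_le_trans zero_less_one le_less_trans) 
    moreover have "0 < dl 0 powr (2 + \<delta>)" using dlpos[of 0] L1 by simp
    ultimately have "0 \<le> A0 * ((1 + xA) powr (1 + \<delta>) * exp (- xA\<^sup>2 / 2))"
      by (simp add: zero_le_divide_iff mult.assoc)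
    then show ?thesis using K1 by (simp add: zero_le_mult_iff)
  qed
  have Tmono: "A0 * (1 + xA) powr (1 + \<delta>) * exp (- xA\<^sup>2 / 2) / dl l powr (2 + \<delta>) \<le> Tb" if "l < L" for l
    unfolding Tb_def
  proof (rule divide_left_mono)
    show "d powr (2 + \<delta>) \<le> dl l powr (2 + \<delta>)" using d_le[OF that] dpos \<delta> by (intro powr_mono2) auto
    show "0 \<le> A0 * (1 + xA) powr (1 + \<delta>) * exp (- xA\<^sup>2 / 2)" using A00 K1 by simp
    show "0 < dl l powr (2 + \<delta>) * d powr (2 + \<delta>)" using dlpos[OF that] dpos by simp
  qed
  have PA: "measure M (Aev l) \<le> (1 - Phi xA) + Tb" if "l < L" for l using jA[OF that] Tmono[OF that] by linarith
  have PB: "measure M (Bev l) \<le> (1 - Phi xA) + Tb" if "l < L" for l using jB[OF that] Tmono[OF that] by linarith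
  have measS: "(\<lambda>\<omega>. (\<Sum>i<n. W l i \<omega>) / sqrt (\<Sum>i<n. (W l i \<omega>)\<^sup>2)) \<in> borel_measurable M"
    and measSn: "(\<lambda>\<omega>. (\<Sum>i<n. - W l i \<omega>) / sqrt (\<Sum>i<n. (- W l i \<omega>)\<^sup>2)) \<in> borel_measurable M"
    if "l < L" for l
    using measW[OF that] by (intro borel_measurable_divide borel_measurable_sum borel_measurable_sqrt
        borel_measurable_power borel_measurable_uminus; simp)+
  have AevS: "Aev l \<in> sets M" if "l < L" for l
    unfolding Aev_def using measS[OF that] by measurable
  have BevS: "Bev l \<in> sets M" if "l < L" for l
    unfolding Bev_def using measSn[OF that] by measurable
  define U where "U = (\<Union>l\<in>{..<L}. Aev l \<union> Bev l)"
  define E where "E = space M - U"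
  have US: "U \<in> sets M" unfolding U_def using AevS BevS by auto
  have ES: "E \<in> sets M" unfolding E_def using US by auto
  have "measure M U \<le> (\<Sum>l<L. measure M (Aev l \<union> Bev l))"
    unfolding U_def by (rule finite_measure_subadditive_finite) (use AevS BevS in auto)
  also have "\<dots> \<le> (\<Sum>l<L. 2 * ((1 - Phi xA) + Tb))"
  proof (rule sum_mono)
    fix l assume "l \<in> {..<L}"
    then have l: "l < L" by simp
    have "measure M (Aev l \<union> Bev l) \<le> measure M (Aev l) + measure M (Bev l)"
      by (rule measure_Un_le[OF AevS[OF l] BevS[OF l]])
    then show "measure M (Aev l \<union> Bev l) \<le> 2 * ((1 - Phi xA) + Tb)" using PA[OF l] PB[OF l] by argo
  qed
  also have "\<dots> = stiv_alpha L A \<delta> A0 d"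
    using alpha_alg[OF L1 xA_def, of A0 \<delta> d] unfolding Tb_def by simp
  finally have mU: "measure M U \<le> stiv_alpha L A \<delta> A0 d" .
  have mE: "measure M E \<ge> 1 - stiv_alpha L A \<delta> A0 d"
    using prob_compl[OF US] mU unfolding E_def by simp
  have good: "\<forall>l<L. \<bar>\<Sum>i<n. z \<omega> i l * u \<omega> i\<bar> \<le> xA * sqrt (\<Sum>i<n. (z \<omega> i l * u \<omega> i)\<^sup>2)"
    and xApos: "0 < xA" if "\<omega> \<in> E" for \<omega>
  proof -
    have om: "\<omega> \<in> space M" "\<And>l. l < L \<Longrightarrow> \<omega> \<notin> Aev l \<and> \<omega> \<notin> Bev l"
      using that unfolding E_def U_def by auto
    have lt: "(\<Sum>i<n. W l i \<omega>) / sqrt (\<Sum>i<n. (W l i \<omega>)\<^sup>2) < xA \<and>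
              - ((\<Sum>i<n. W l i \<omega>) / sqrt (\<Sum>i<n. (W l i \<omega>)\<^sup>2)) < xA" if "l < L" for l
      using om(1) om(2)[OF that] unfolding Aev_def Bev_def by (auto simp: sum_negf)
    show "0 < xA" using lt[of 0] L1 by linarith
    show "\<forall>l<L. \<bar>\<Sum>i<n. z \<omega> i l * u \<omega> i\<bar> \<le> xA * sqrt (\<Sum>i<n. (z \<omega> i l * u \<omega> i)\<^sup>2)"
    proof (intro allI impI)
      fix l assume l: "l < L"
      define S where "S = (\<Sum>i<n. W l i \<omega>)"
      define V where "V = (\<Sum>i<n. (W l i \<omega>)\<^sup>2)"
      have V0: "0 \<le> V" unfolding V_def by (simp add: sum_nonneg)
      have "\<bar>S\<bar> \<le> xA * sqrt V"
      proof (cases "V = 0")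
        case True
        then have "\<forall>i\<in>{..<n}. (W l i \<omega>)\<^sup>2 = 0" unfolding V_def by (subst sum_nonneg_eq_0_iff[symmetric]) auto
        then have "S = 0" unfolding S_def by simp
        then show ?thesis using True by simp
      next
        case False
        then have sp: "0 < sqrt V" using V0 by simp
        have "S / sqrt V < xA" "- (S / sqrt V) < xA" using lt[OF l] unfolding S_def V_def by auto
        then have "\<bar>S / sqrt V\<bar> < xA" by linarith
        then have "\<bar>S\<bar> / sqrt V < xA" using sp by simp
        then show ?thesis using sp by (simp add: pos_divide_less_eq)
      qed
      then show "\<bar>\<Sum>i<n. z \<omega> i l * u \<omega> i\<bar> \<le> xA * sqrt (\<Sum>i<n. (z \<omega> i l * u \<omega> i)\<^sup>2)"
        unfolding S_def V_def W_def .
    qed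
  qed
  have rr: "A * sqrt (2 * ln (real L) / real n) = xA / sqrt (real n)"
    unfolding xA_def by (simp add: real_sqrt_divide)
  have main: "ereal (lp_norm K p (\<lambda>k. xstar n (x \<omega>) k * (\<beta>h k - \<beta>s k)))
          \<le> Min ((\<lambda>J. stiv_bound n K L kend c p (A * sqrt (2 * ln (real L) / real n))
                       (x \<omega>) (z \<omega>) \<beta>s \<sigma>h J) ` Pow {..<K})"
    if om: "\<omega> \<in> E" and sol: "stiv_solution n K L (A * sqrt (2 * ln (real L) / real n)) c (y \<omega>) (x \<omega>) (z \<omega>) \<beta>h \<sigma>h"
    for \<omega> \<beta>h \<sigma>h
  proof -
    have oms: "\<omega> \<in> space M" using om unfolding E_def by auto
    have "ereal (lp_norm K p (\<lambda>k. xstar n (x \<omega>) k * (\<beta>h k - \<beta>s k)))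
          \<le> stiv_bound n K L kend c p (A * sqrt (2 * ln (real L) / real n)) (x \<omega>) (z \<omega>) \<beta>s \<sigma>h J" for J
      by (rule det[OF dims(1) dims(3) dims(4) c rr xApos[OF om] _ _ good[OF om] sol p])
         (use model exo oms in auto)
    then show ?thesis by (subst Min_ge_iff) auto
  qed
  show ?thesis
    using ES mE main unfolding d_def by blast
qed


end
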